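(* Let $G$ be an infinite discrete countable group, $(X,G)$ a $G$-system with metric $d$, $\gamma\in(0,1)$ and $K\in\mathbb{N}\setminus\{1\}$. Assume there is $\epsilon>0$ such that for every $M\in\mathbb{N}$ and all nonempty open subsets $U_1,\dots,U_M$ of $X$ there exist $g\in G$, $\mathcal{M}\subset\{1,\dots,M\}$ and points $x_{m,k}\in U_m$ for $k\in\{1,\dots,K\}$, $m\in\mathcal{M}$, such that (1) $|\mathcal{M}|\ge(1-\gamma)M$; (2) $d(gx_{m,k},gx_{m,k'})>\epsilon$ for all $1\le k<k'\le K$ and $m\in\mathcal{M}$. Then $h^*_{top}(X,G)\ge\log((1-\gamma)K)$.
   Context: A $G$-system is a compact metric space $(X,d)$ on which $G$ acts by homeomorphisms. For a sequence $\mathcal{A}=(g_n)$ in $G$ and a finite open cover $\mathcal{U}$, $h_{top}^{\mathcal{A}}(G,\mathcal{U})=\limsup_n\frac1n\log N(\bigvee_{i=1}^ng_i^{-1}\mathcal{U})$ ($N$ = minimal cardinality of a subcover), $h^{\mathcal{A}}_{top}(X,G)=\sup_{\mathcal{U}}h^{\mathcal{A}}_{top}(G,\mathcal{U})$, and $h^*_{top}(X,G)=\sup_{\mathcal{A}}h^{\mathcal{A}}_{top}(X,G)$ over all sequences in $G$. *)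

theory Defs
  imports "HOL-Analysis.Analysis" "HOL-Algebra.Group"
begin

text \<open>A G-system: a compact metric space X (a compact subset of a metric space type)
  on which the group G acts by homeomorphisms (each act g is continuous on X and maps X
  into X; the action laws make act g a homeomorphism with inverse act (inv g)).\<close>
definition G_system :: "('g, 'b) monoid_scheme \<Rightarrow> ('g \<Rightarrow> 'a::metric_space \<Rightarrow> 'a) \<Rightarrow> 'a set \<Rightarrow> bool" where
  "G_system G act X \<longleftrightarrow> group G \<and> compact X \<and>
     (\<forall>g\<in>carrier G. act g ` X \<subseteq> X \<and> continuous_on X (act g)) \<and>
     (\<forall>x\<in>X. act \<one>\<^bsub>G\<^esub> x = x) \<and>
     (\<forall>g\<in>carrier G. \<forall>h\<in>carrier G. \<forall>x\<in>X. act (g \<otimes>\<^bsub>G\<^esub> h) x = act g (act h x))"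

definition open_cover :: "'a::metric_space set \<Rightarrow> 'a set set \<Rightarrow> bool" where
  "open_cover X \<U> \<longleftrightarrow> finite \<U> \<and> (\<forall>U\<in>\<U>. openin (top_of_set X) U) \<and> \<Union>\<U> = X"

definition Ncov :: "'a set \<Rightarrow> 'a set set \<Rightarrow> nat" where
  "Ncov X \<V> = (LEAST n. \<exists>\<W>. \<W> \<subseteq> \<V> \<and> finite \<W> \<and> X \<subseteq> \<Union>\<W> \<and> card \<W> = n)"

definition join_cover :: "('g \<Rightarrow> 'a \<Rightarrow> 'a) \<Rightarrow> 'a set \<Rightarrow> (nat \<Rightarrow> 'g) \<Rightarrow> 'a set set \<Rightarrow> nat \<Rightarrow> 'a set set" where
  "join_cover act X gs \<U> n =
     {X \<inter> (\<Inter>i\<in>{1..n}. {x\<in>X. act (gs i) x \<in> V i}) | V. \<forall>i\<in>{1..n}. V i \<in> \<U>}"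

definition seq_entropy_cover :: "('g \<Rightarrow> 'a \<Rightarrow> 'a) \<Rightarrow> 'a set \<Rightarrow> (nat \<Rightarrow> 'g) \<Rightarrow> 'a set set \<Rightarrow> ereal" where
  "seq_entropy_cover act X gs \<U> =
     limsup (\<lambda>n. ereal (ln (real (Ncov X (join_cover act X gs \<U> n))) / real n))"

definition seq_entropy :: "('g \<Rightarrow> 'a::metric_space \<Rightarrow> 'a) \<Rightarrow> 'a set \<Rightarrow> (nat \<Rightarrow> 'g) \<Rightarrow> ereal" where
  "seq_entropy act X gs = (SUP \<U>\<in>{\<U>. open_cover X \<U>}. seq_entropy_cover act X gs \<U>)"

definition sup_seq_entropy :: "('g, 'b) monoid_scheme \<Rightarrow> ('g \<Rightarrow> 'a::metric_space \<Rightarrow> 'a) \<Rightarrow> 'a set \<Rightarrow> ereal" where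
  "sup_seq_entropy G act X = (SUP gs\<in>{gs. \<forall>n. gs n \<in> carrier G}. seq_entropy act X gs)"

end

theory Submission
  imports Defs
begin

definition gsep :: "('g \<Rightarrow> 'a::metric_space \<Rightarrow> 'a) \<Rightarrow> 'g \<Rightarrow> real \<Rightarrow> 'a set \<Rightarrow> 'a set \<Rightarrow> bool" where
  "gsep act g e A B \<longleftrightarrow> (\<forall>y\<in>A. \<forall>z\<in>B. e < dist (act g y) (act g z))"

lemma pos_lower_bound:
  fixes S :: "real set"
  assumes "finite S" "\<forall>s\<in>S. 0 < s"
  obtains d where "d > 0" "\<forall>s\<in>S. 2 * d < s"
proof (cases "S = {}")
  case True
  then show ?thesis using that[of 1] by auto
next
  case False
  have m: "Min S > 0" using assms False by auto
  show ?thesis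
  proof (rule that[of "Min S / 4"])
    show "0 < Min S / 4" using m by simp
    show "\<forall>s\<in>S. 2 * (Min S / 4) < s" using Min_le[OF assms(1)] m by fastforce
  qed
qed

lemma step_lemma:
  fixes G :: "('g, 'b) monoid_scheme" and act :: "'g \<Rightarrow> 'a::metric_space \<Rightarrow> 'a"
    and X :: "'a set" and \<gamma> :: real and K :: nat and W :: "'a set set"
  assumes Gs: "G_system G act X" and e: "e > 0" and K: "K \<ge> 2"
    and H: "\<forall>M::nat. \<forall>U::nat \<Rightarrow> 'a set.
           (\<forall>m\<in>{1..M}. openin (top_of_set X) (U m) \<and> U m \<noteq> {}) \<longrightarrow>
           (\<exists>g\<in>carrier G. \<exists>\<M>. \<exists>x::nat \<Rightarrow> nat \<Rightarrow> 'a.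
              \<M> \<subseteq> {1..M} \<and>
              (\<forall>m\<in>\<M>. \<forall>k\<in>{1..K}. x m k \<in> U m) \<and>
              real (card \<M>) \<ge> (1 - \<gamma>) * real M \<and>
              (\<forall>m\<in>\<M>. \<forall>k\<in>{1..K}. \<forall>k'\<in>{1..K}. k < k' \<longrightarrow>
                 dist (act g (x m k)) (act g (x m k')) > e))"
    and fin: "finite W" and op: "\<forall>A\<in>W. openin (top_of_set X) A \<and> A \<noteq> {}"
    and dis: "\<forall>A\<in>W. \<forall>B\<in>W. A \<noteq> B \<longrightarrow> A \<inter> B = {}"
  shows "\<exists>g W'. g \<in> carrier G \<and> finite W' \<and> (\<forall>A\<in>W'. openin (top_of_set X) A \<and> A \<noteq> {}) \<and>
     (1 - \<gamma>) * real K * real (card W) \<le> real (card W') \<and>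
     (\<forall>A\<in>W'. \<forall>B\<in>W'. A \<noteq> B \<longrightarrow>
        (\<exists>A0\<in>W. \<exists>B0\<in>W. A0 \<noteq> B0 \<and> A \<subseteq> A0 \<and> B \<subseteq> B0) \<or> gsep act g e A B)"
proof -
  obtain h where h: "bij_betw h {1..card W} W" using ex_bij_betw_nat_finite_1[OF fin] by blast
  define M where "M = card W"
  have hop: "\<forall>m\<in>{1..M}. openin (top_of_set X) (h m) \<and> h m \<noteq> {}"
    using h op unfolding M_def bij_betw_def by auto
  obtain g \<M> x where g: "g \<in> carrier G" and MM: "\<M> \<subseteq> {1..M}"
    and xin: "\<forall>m\<in>\<M>. \<forall>k\<in>{1..K}. x m k \<in> h m"
    and card: "real (card \<M>) \<ge> (1 - \<gamma>) * real M"
    and sepx: "\<forall>m\<in>\<M>. \<forall>k\<in>{1..K}. \<forall>k'\<in>{1..K}. k < k' \<longrightarrow>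
                 dist (act g (x m k)) (act g (x m k')) > e"
    using mp[OF H[THEN spec[where x=M], THEN spec[where x=h]] hop] by (elim bexE exE conjE) blast
  have finM: "finite \<M>" using MM finite_subset by blast
  define S where "S = (\<lambda>(m,k,k'). dist (act g (x m k)) (act g (x m k')) - e) `
      {(m,k,k'). m \<in> \<M> \<and> k \<in> {1..K} \<and> k' \<in> {1..K} \<and> k < k'}"
  have "finite {(m,k,k'). m \<in> \<M> \<and> k \<in> {1..K} \<and> k' \<in> {1..K} \<and> k < k'}"
    by (rule finite_subset[of _ "\<M> \<times> {1..K} \<times> {1..K}"]) (use finM in auto)
  then have finS: "finite S" unfolding S_def by simp
  have posS: "\<forall>s\<in>S. 0 < s" unfolding S_def using sepx by auto
  obtain \<delta> where dpos: "\<delta> > 0" and dS: "\<forall>s\<in>S. 2 * \<delta> < s"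
    using pos_lower_bound[OF finS posS] by blast
  have slack: "dist (act g (x m k)) (act g (x m k')) > e + 2 * \<delta>"
    if "m \<in> \<M>" "k \<in> {1..K}" "k' \<in> {1..K}" "k \<noteq> k'" for m k k'
  proof (cases "k < k'")
    case True
    have "dist (act g (x m k)) (act g (x m k')) - e \<in> S" unfolding S_def
      by (rule image_eqI[where x="(m,k,k')"]) (use that True in simp_all)
    then have "2 * \<delta> < dist (act g (x m k)) (act g (x m k')) - e" using dS by blast
    then show ?thesis by linarith
  next
    case False
    then have "k' < k" using that by auto
    have "dist (act g (x m k')) (act g (x m k)) - e \<in> S" unfolding S_def
      by (rule image_eqI[where x="(m,k',k)"]) (use that \<open>k' < k\<close> in simp_all)
    then have "2 * \<delta> < dist (act g (x m k')) (act g (x m k)) - e" using dS by blast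
    then show ?thesis by (simp add: dist_commute)
  qed
  define Wm where "Wm m k = h m \<inter> (X \<inter> act g -` ball (act g (x m k)) \<delta>)" for m k
  have Xsub: "h m \<subseteq> X" if "m \<in> \<M>" for m
  proof -
    have "m \<in> {1..M}" using MM that by blast
    then have "openin (top_of_set X) (h m)" using hop by blast
    then show ?thesis by (rule openin_imp_subset)
  qed
  have gc: "continuous_on X (act g)" using Gs g unfolding G_system_def by blast
  have xW: "x m k \<in> Wm m k" if "m \<in> \<M>" "k \<in> {1..K}" for m k
  proof -
    have "x m k \<in> h m" using xin that by blast
    moreover have "x m k \<in> X" using Xsub[OF that(1)] calculation by blast
    ultimately show ?thesis unfolding Wm_def using dpos by simp
  qed
  have Wop: "openin (top_of_set X) (Wm m k) \<and> Wm m k \<noteq> {}" if "m \<in> \<M>" "k \<in> {1..K}" for m k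
  proof
    have "openin (top_of_set X) (X \<inter> act g -` ball (act g (x m k)) \<delta>)"
      by (rule continuous_openin_preimage_gen[OF gc]) simp
    moreover have "m \<in> {1..M}" using MM that by blast
    then have "openin (top_of_set X) (h m)" using hop by blast
    ultimately show "openin (top_of_set X) (Wm m k)" unfolding Wm_def by (rule openin_Int[rotated])
    show "Wm m k \<noteq> {}" using xW[OF that] by blast
  qed
  have Wsep: "gsep act g e (Wm m k) (Wm m k')"
    if "m \<in> \<M>" "k \<in> {1..K}" "k' \<in> {1..K}" "k \<noteq> k'" for m k k'
    unfolding gsep_def
  proof (intro ballI)
    fix y z assume y: "y \<in> Wm m k" and z: "z \<in> Wm m k'"
    have "dist (act g (x m k)) (act g y) < \<delta>" "dist (act g (x m k')) (act g z) < \<delta>"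
      using y z unfolding Wm_def by auto
    moreover have "dist (act g (x m k')) (act g z) = dist (act g z) (act g (x m k'))"
      by (rule dist_commute)
    moreover have "dist (act g (x m k)) (act g (x m k')) \<le>
      dist (act g (x m k)) (act g y) + dist (act g y) (act g z) + dist (act g z) (act g (x m k'))"
      using dist_triangle[of "act g (x m k)" "act g (x m k')" "act g y"]
        dist_triangle[of "act g y" "act g (x m k')" "act g z"] by linarith
    ultimately show "e < dist (act g y) (act g z)" using slack[OF that] by linarith
  qed
  have hinj: "inj_on h {1..M}" using h unfolding bij_betw_def M_def by auto
  have hW: "h m \<in> W" if "m \<in> \<M>" for m using h MM that unfolding bij_betw_def M_def by auto
  have inj: "inj_on (\<lambda>(m,k). Wm m k) (\<M> \<times> {1..K})"
  proof (rule inj_onI, clarify)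
    fix m k m' k' assume a: "m \<in> \<M>" "k \<in> {1..K}" "m' \<in> \<M>" "k' \<in> {1..K}" and eq: "Wm m k = Wm m' k'"
    show "m = m' \<and> k = k'"
    proof (cases "m = m'")
      case True
      show ?thesis
      proof (rule ccontr)
        assume "\<not> (m = m' \<and> k = k')"
        then have "k \<noteq> k'" using True by auto
        then have "gsep act g e (Wm m k) (Wm m k')" using Wsep a by auto
        moreover have "x m k \<in> Wm m k'" using xW[OF a(1,2)] eq True by simp
        ultimately have "e < dist (act g (x m k)) (act g (x m k))"
          using xW[OF a(1,2)] unfolding gsep_def by blast
        then show False using e by simp
      qed
    next
      case False
      then have "h m \<noteq> h m'" using hinj a MM by (meson inj_on_eq_iff subsetD)
      then have "h m \<inter> h m' = {}" using dis hW a by blast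
      moreover have "x m k \<in> h m \<inter> h m'" using xW[OF a(1,2)] eq unfolding Wm_def by auto
      ultimately show ?thesis by auto
    qed
  qed
  define W' where "W' = (\<lambda>(m,k). Wm m k) ` (\<M> \<times> {1..K})"
  have "card W' = card \<M> * K" unfolding W'_def using card_image[OF inj] by (simp add: card_cartesian_product)
  then have eqW': "real (card W') = real (card \<M>) * real K" by simp
  have "(1 - \<gamma>) * real M * real K \<le> real (card \<M>) * real K"
    using card by (rule mult_right_mono) simp
  moreover have "(1 - \<gamma>) * real K * real (card W) = (1 - \<gamma>) * real M * real K"
    unfolding M_def by (simp only: mult_ac)
  ultimately have cardW': "(1 - \<gamma>) * real K * real (card W) \<le> real (card W')"
    using eqW' by linarith
  show ?thesis
  proof (intro exI conjI)
    show "g \<in> carrier G" by fact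
    show "finite W'" unfolding W'_def using finM by simp
    show "\<forall>A\<in>W'. openin (top_of_set X) A \<and> A \<noteq> {}" unfolding W'_def using Wop by auto
    show "(1 - \<gamma>) * real K * real (card W) \<le> real (card W')" by fact
    show "\<forall>A\<in>W'. \<forall>B\<in>W'. A \<noteq> B \<longrightarrow>
        (\<exists>A0\<in>W. \<exists>B0\<in>W. A0 \<noteq> B0 \<and> A \<subseteq> A0 \<and> B \<subseteq> B0) \<or> gsep act g e A B"
    proof (intro ballI impI)
      fix A B assume A: "A \<in> W'" and B: "B \<in> W'" and ne: "A \<noteq> B"
      obtain m k where a1: "m \<in> \<M>" "k \<in> {1..K}" and Aeq: "A = Wm m k" using A unfolding W'_def by blast
      obtain m' k' where a2: "m' \<in> \<M>" "k' \<in> {1..K}" and Beq: "B = Wm m' k'" using B unfolding W'_def by blast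
      show "(\<exists>A0\<in>W. \<exists>B0\<in>W. A0 \<noteq> B0 \<and> A \<subseteq> A0 \<and> B \<subseteq> B0) \<or> gsep act g e A B"
      proof (cases "m = m'")
        case True
        then have "k \<noteq> k'" using ne Aeq Beq by auto
        then have "gsep act g e A B" using Wsep[OF a1 a2(2)] True Aeq Beq by simp
        then show ?thesis by (rule disjI2)
      next
        case False
        then have "h m \<noteq> h m'" using hinj a1 a2 MM by (meson inj_on_eq_iff subsetD)
        moreover have "A \<subseteq> h m" "B \<subseteq> h m'" unfolding Aeq Beq Wm_def by auto
        ultimately show ?thesis using hW[OF a1(1)] hW[OF a2(1)] by blast
      qed
    qed
  qed
qed

lemma join_finite_cover:
  assumes finU: "finite \<U>" and UX: "\<Union>\<U> = X" and maps: "\<forall>i. \<forall>x\<in>X. act (gs i) x \<in> X"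
  shows "finite (join_cover act X gs \<U> n) \<and> X \<subseteq> \<Union>(join_cover act X gs \<U> n)"
proof
  let ?f = "\<lambda>V. X \<inter> (\<Inter>i\<in>{1..n}. {x\<in>X. act (gs i) x \<in> V i})"
  have "join_cover act X gs \<U> n \<subseteq> ?f ` (PiE {1..n} (\<lambda>_. \<U>))"
  proof
    fix S assume "S \<in> join_cover act X gs \<U> n"
    then obtain V where S: "S = ?f V" and V: "\<forall>i\<in>{1..n}. V i \<in> \<U>"
      unfolding join_cover_def by blast
    have "S = ?f (restrict V {1..n})" unfolding S by auto
    moreover have "restrict V {1..n} \<in> PiE {1..n} (\<lambda>_. \<U>)" using V by auto
    ultimately show "S \<in> ?f ` (PiE {1..n} (\<lambda>_. \<U>))" by blast
  qed
  moreover have "finite (PiE {1..n} (\<lambda>_. \<U>))" using finU by (simp add: finite_PiE)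
  ultimately show "finite (join_cover act X gs \<U> n)" using finite_subset by blast
  show "X \<subseteq> \<Union>(join_cover act X gs \<U> n)"
  proof
    fix x assume x: "x \<in> X"
    define V where "V i = (SOME U. U \<in> \<U> \<and> act (gs i) x \<in> U)" for i
    have V: "V i \<in> \<U> \<and> act (gs i) x \<in> V i" for i
    proof -
      have "\<exists>U. U \<in> \<U> \<and> act (gs i) x \<in> U" using maps x UX by blast
      then show ?thesis unfolding V_def by (rule someI_ex)
    qed
    have "?f V \<in> join_cover act X gs \<U> n" unfolding join_cover_def using V by blast
    moreover have "x \<in> ?f V" using x V by auto
    ultimately show "x \<in> \<Union>(join_cover act X gs \<U> n)" by blast
  qed
qed

lemma ncov_lower:
  assumes finU: "finite \<U>" and UX: "\<Union>\<U> = X" and maps: "\<forall>i. \<forall>x\<in>X. act (gs i) x \<in> X"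
    and diam: "\<forall>U\<in>\<U>. \<forall>a\<in>U. \<forall>b\<in>U. dist a b \<le> e"
    and Wne: "\<forall>A\<in>W. A \<noteq> {} \<and> A \<subseteq> X"
    and Wsep: "\<forall>A\<in>W. \<forall>B\<in>W. A \<noteq> B \<longrightarrow> (\<exists>i\<in>{1..n}. gsep act (gs i) e A B)"
  shows "card W \<le> Ncov X (join_cover act X gs \<U> n)"
proof -
  let ?J = "join_cover act X gs \<U> n"
  have J: "finite ?J" "X \<subseteq> \<Union>?J" using join_finite_cover[where act=act and gs=gs and n=n, OF finU UX maps] by auto
  have ex: "\<exists>m \<V>. \<V> \<subseteq> ?J \<and> finite \<V> \<and> X \<subseteq> \<Union>\<V> \<and> card \<V> = m"
    using J by (intro exI[of _ "card ?J"] exI[of _ ?J]) simp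
  have "\<exists>\<V>. \<V> \<subseteq> ?J \<and> finite \<V> \<and> X \<subseteq> \<Union>\<V> \<and> card \<V> = Ncov X ?J"
    unfolding Ncov_def by (rule LeastI_ex[OF ex])
  then obtain \<V> where VJ: "\<V> \<subseteq> ?J" and finV: "finite \<V>" and XV: "X \<subseteq> \<Union>\<V>"
    and cV: "card \<V> = Ncov X ?J" by blast
  define y where "y A = (SOME a. a \<in> A)" for A :: "'a set"
  have yA: "y A \<in> A" if "A \<in> W" for A using Wne that unfolding y_def by (simp add: some_in_eq)
  define f where "f A = (SOME V. V \<in> \<V> \<and> y A \<in> V)" for A
  have fA: "f A \<in> \<V> \<and> y A \<in> f A" if "A \<in> W" for A
  proof -
    have "y A \<in> X" using yA[OF that] Wne that by auto
    then have "y A \<in> \<Union>\<V>" using XV by blast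
    then have "\<exists>V. V \<in> \<V> \<and> y A \<in> V" by blast
    then show ?thesis unfolding f_def by (rule someI_ex)
  qed
  have "inj_on f W"
  proof (rule inj_onI, rule ccontr)
    fix A B assume A: "A \<in> W" and B: "B \<in> W" and eq: "f A = f B" and ne: "A \<noteq> B"
    have "\<exists>i\<in>{1..n}. gsep act (gs i) e A B" using Wsep A B ne by simp
    then obtain i where i: "i \<in> {1..n}" and gs: "gsep act (gs i) e A B" by (rule bexE)
    have "f A \<in> ?J" using fA[OF A] VJ by (auto simp only: subset_iff)
    then have "\<exists>V. f A = X \<inter> (\<Inter>i\<in>{1..n}. {x\<in>X. act (gs i) x \<in> V i}) \<and> (\<forall>i\<in>{1..n}. V i \<in> \<U>)"
      unfolding join_cover_def by simp
    then obtain V where fV: "f A = X \<inter> (\<Inter>i\<in>{1..n}. {x\<in>X. act (gs i) x \<in> V i})"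
      and V: "\<forall>i\<in>{1..n}. V i \<in> \<U>" by (elim exE conjE)
    have yAf: "y A \<in> f A" using fA[OF A] by simp
    have yBf: "y B \<in> f A" using fA[OF B] eq by simp
    have "act (gs i) (y A) \<in> V i" using yAf i unfolding fV by simp
    moreover have "act (gs i) (y B) \<in> V i" using yBf i unfolding fV by simp
    moreover have "V i \<in> \<U>" using V i by simp
    ultimately have "dist (act (gs i) (y A)) (act (gs i) (y B)) \<le> e" using diam by simp
    moreover have "e < dist (act (gs i) (y A)) (act (gs i) (y B))"
      using gs yA[OF A] yA[OF B] unfolding gsep_def by simp
    ultimately show False by linarith
  qed
  moreover have "f ` W \<subseteq> \<V>" using fA by (auto simp only: image_subset_iff)
  ultimately have "card W \<le> card \<V>" using finV by (rule card_inj_on_le)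
  then show ?thesis using cV by simp
qed


theorem proposition3p1:
  fixes G :: "('g, 'b) monoid_scheme" and act :: "'g \<Rightarrow> 'a::metric_space \<Rightarrow> 'a"
    and X :: "'a set" and \<gamma> :: real and K :: nat
  assumes "G_system G act X" and "X \<noteq> {}"
    and "infinite (carrier G)" and "countable (carrier G)"
    and "0 < \<gamma>" and "\<gamma> < 1" and "K \<ge> 2"
    and "\<exists>\<epsilon>>0. \<forall>M::nat. \<forall>U::nat \<Rightarrow> 'a set.
           (\<forall>m\<in>{1..M}. openin (top_of_set X) (U m) \<and> U m \<noteq> {}) \<longrightarrow>
           (\<exists>g\<in>carrier G. \<exists>\<M>. \<exists>x::nat \<Rightarrow> nat \<Rightarrow> 'a.
              \<M> \<subseteq> {1..M} \<and>
              (\<forall>m\<in>\<M>. \<forall>k\<in>{1..K}. x m k \<in> U m) \<and>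
              real (card \<M>) \<ge> (1 - \<gamma>) * real M \<and>
              (\<forall>m\<in>\<M>. \<forall>k\<in>{1..K}. \<forall>k'\<in>{1..K}. k < k' \<longrightarrow>
                 dist (act g (x m k)) (act g (x m k')) > \<epsilon>))"
  shows "sup_seq_entropy G act X \<ge> ereal (ln ((1 - \<gamma>) * real K))"
proof -
  note Gs = assms(1)
  obtain e where e: "e > 0" and H: "\<forall>M::nat. \<forall>U::nat \<Rightarrow> 'a set.
           (\<forall>m\<in>{1..M}. openin (top_of_set X) (U m) \<and> U m \<noteq> {}) \<longrightarrow>
           (\<exists>g\<in>carrier G. \<exists>\<M>. \<exists>x::nat \<Rightarrow> nat \<Rightarrow> 'a.
              \<M> \<subseteq> {1..M} \<and>
              (\<forall>m\<in>\<M>. \<forall>k\<in>{1..K}. x m k \<in> U m) \<and>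
              real (card \<M>) \<ge> (1 - \<gamma>) * real M \<and>
              (\<forall>m\<in>\<M>. \<forall>k\<in>{1..K}. \<forall>k'\<in>{1..K}. k < k' \<longrightarrow>
                 dist (act g (x m k)) (act g (x m k')) > e))"
    using assms(8) by (elim exE conjE) blast
  define c where "c = (1 - \<gamma>) * real K"
  have cpos: "c > 0" unfolding c_def using assms(6,7) by simp
  have grp: "group G" and cX: "compact X" using Gs unfolding G_system_def by auto
  have one: "\<one>\<^bsub>G\<^esub> \<in> carrier G" using grp by (simp add: group.is_monoid monoid.one_closed)
  have maps0: "\<forall>g\<in>carrier G. \<forall>x\<in>X. act g x \<in> X" using Gs unfolding G_system_def by blast
  have covX: "X \<subseteq> \<Union>((\<lambda>c. ball c (e/2)) ` X)"
  proof
    fix x assume "x \<in> X"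
    moreover have "x \<in> ball x (e/2)" using e by simp
    ultimately show "x \<in> \<Union>((\<lambda>c. ball c (e/2)) ` X)" by blast
  qed
  obtain C where CX: "C \<subseteq> X" and finC: "finite C" and XC: "X \<subseteq> \<Union>((\<lambda>c. ball c (e/2)) ` C)"
    by (rule compactE_image[OF cX _ covX]) simp_all
  define \<U> where "\<U> = (\<lambda>c. X \<inter> ball c (e/2)) ` C"
  have finU: "finite \<U>" unfolding \<U>_def using finC by simp
  have UX: "\<Union>\<U> = X" unfolding \<U>_def using XC by blast
  have ocU: "open_cover X \<U>" unfolding open_cover_def
  proof (intro conjI ballI)
    show "finite \<U>" by fact
    show "\<Union>\<U> = X" by fact
    fix U assume "U \<in> \<U>"
    then obtain c0 where "U = X \<inter> ball c0 (e/2)" unfolding \<U>_def by blast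
    then show "openin (top_of_set X) U" by (simp add: openin_open_Int)
  qed
  have diam: "\<forall>U\<in>\<U>. \<forall>a\<in>U. \<forall>b\<in>U. dist a b \<le> e"
  proof (intro ballI)
    fix U a b assume "U \<in> \<U>" "a \<in> U" "b \<in> U"
    then obtain c0 where "a \<in> ball c0 (e/2)" "b \<in> ball c0 (e/2)" unfolding \<U>_def by blast
    then have "dist c0 a < e/2" "dist c0 b < e/2" by simp_all
    moreover have "dist a b \<le> dist a c0 + dist c0 b" by (rule dist_triangle)
    moreover have "dist a c0 = dist c0 a" by (rule dist_commute)
    ultimately show "dist a b \<le> e" by linarith
  qed
  define P where "P W g W' \<longleftrightarrow> g \<in> carrier G \<and> finite W' \<and> (\<forall>A\<in>W'. openin (top_of_set X) A \<and> A \<noteq> {}) \<and>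
     (1 - \<gamma>) * real K * real (card W) \<le> real (card W') \<and>
     (\<forall>A\<in>W'. \<forall>B\<in>W'. A \<noteq> B \<longrightarrow>
        (\<exists>A0\<in>W. \<exists>B0\<in>W. A0 \<noteq> B0 \<and> A \<subseteq> A0 \<and> B \<subseteq> B0) \<or> gsep act g e A B)"
    for W :: "'a set set" and g W'
  define st where "st = rec_nat (\<one>\<^bsub>G\<^esub>, {X}) (\<lambda>n p. SOME q. P (snd p) (fst q) (snd q))"
  define gs where "gs n = fst (st n)" for n
  define Ws where "Ws n = snd (st n)" for n
  have st0: "st 0 = (\<one>\<^bsub>G\<^esub>, {X})" unfolding st_def by simp
  have stS: "st (Suc n) = (SOME q. P (Ws n) (fst q) (snd q))" for n unfolding st_def Ws_def by simp
  define Inv where "Inv n \<longleftrightarrow> gs n \<in> carrier G \<and> finite (Ws n) \<and>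
     (\<forall>A\<in>Ws n. openin (top_of_set X) A \<and> A \<noteq> {}) \<and> c ^ n \<le> real (card (Ws n)) \<and>
     (\<forall>A\<in>Ws n. \<forall>B\<in>Ws n. A \<noteq> B \<longrightarrow> (\<exists>i\<in>{1..n}. gsep act (gs i) e A B))" for n
  have inv: "Inv n" for n
  proof (induction n)
    case 0
    have "openin (top_of_set X) X" by simp
    then show ?case unfolding Inv_def gs_def Ws_def st0 using one assms(2) by simp
  next
    case (Suc n)
    then have I: "gs n \<in> carrier G" "finite (Ws n)" "\<forall>A\<in>Ws n. openin (top_of_set X) A \<and> A \<noteq> {}"
      "c ^ n \<le> real (card (Ws n))"
      "\<forall>A\<in>Ws n. \<forall>B\<in>Ws n. A \<noteq> B \<longrightarrow> (\<exists>i\<in>{1..n}. gsep act (gs i) e A B)"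
      unfolding Inv_def by simp_all
    have dis: "\<forall>A\<in>Ws n. \<forall>B\<in>Ws n. A \<noteq> B \<longrightarrow> A \<inter> B = {}"
    proof (intro ballI impI)
      fix A B assume "A \<in> Ws n" "B \<in> Ws n" "A \<noteq> B"
      then obtain i where gi: "gsep act (gs i) e A B" using I(5) by blast
      show "A \<inter> B = {}"
      proof (rule ccontr)
        assume "A \<inter> B \<noteq> {}"
        then obtain y where "y \<in> A" "y \<in> B" by blast
        then have "e < dist (act (gs i) y) (act (gs i) y)" using gi unfolding gsep_def by blast
        then show False using e by simp
      qed
    qed
    have "\<exists>g W'. P (Ws n) g W'" unfolding P_def
      by (rule step_lemma[OF Gs e assms(7) H I(2) I(3) dis])
    then have "\<exists>q. P (Ws n) (fst q) (snd q)" by simp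
    then have Pn: "P (Ws n) (fst (st (Suc n))) (snd (st (Suc n)))" unfolding stS
      by (rule someI_ex)
    then have Pn: "P (Ws n) (gs (Suc n)) (Ws (Suc n))" unfolding gs_def Ws_def .
    then have Q: "gs (Suc n) \<in> carrier G" "finite (Ws (Suc n))"
        "\<forall>A\<in>Ws (Suc n). openin (top_of_set X) A \<and> A \<noteq> {}"
        "(1 - \<gamma>) * real K * real (card (Ws n)) \<le> real (card (Ws (Suc n)))"
        "\<forall>A\<in>Ws (Suc n). \<forall>B\<in>Ws (Suc n). A \<noteq> B \<longrightarrow>
        (\<exists>A0\<in>Ws n. \<exists>B0\<in>Ws n. A0 \<noteq> B0 \<and> A \<subseteq> A0 \<and> B \<subseteq> B0) \<or> gsep act (gs (Suc n)) e A B"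
      unfolding P_def by simp_all
    have cS: "c ^ Suc n \<le> real (card (Ws (Suc n)))"
    proof -
      have "c ^ Suc n = c * c ^ n" by simp
      also have "\<dots> \<le> c * real (card (Ws n))" using I(4) cpos by simp
      also have "\<dots> \<le> real (card (Ws (Suc n)))" using Q(4) unfolding c_def by simp
      finally show ?thesis .
    qed
    have sepS: "\<forall>A\<in>Ws (Suc n). \<forall>B\<in>Ws (Suc n). A \<noteq> B \<longrightarrow> (\<exists>i\<in>{1..Suc n}. gsep act (gs i) e A B)"
    proof (intro ballI impI)
      fix A B assume A: "A \<in> Ws (Suc n)" and B: "B \<in> Ws (Suc n)" and ne: "A \<noteq> B"
      have "(\<exists>A0\<in>Ws n. \<exists>B0\<in>Ws n. A0 \<noteq> B0 \<and> A \<subseteq> A0 \<and> B \<subseteq> B0) \<or> gsep act (gs (Suc n)) e A B"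
        using Q(5)[rule_format, OF A B ne] .
      then show "\<exists>i\<in>{1..Suc n}. gsep act (gs i) e A B"
      proof
        assume "\<exists>A0\<in>Ws n. \<exists>B0\<in>Ws n. A0 \<noteq> B0 \<and> A \<subseteq> A0 \<and> B \<subseteq> B0"
        then obtain A0 B0 where AB: "A0 \<in> Ws n" "B0 \<in> Ws n" "A0 \<noteq> B0" and sub: "A \<subseteq> A0" "B \<subseteq> B0" by blast
        then obtain i where i: "i \<in> {1..n}" and gi: "gsep act (gs i) e A0 B0" using I(5) by blast
        have "gsep act (gs i) e A B" using gi sub unfolding gsep_def by blast
        moreover have "i \<in> {1..Suc n}" using i by simp
        ultimately show ?thesis by blast
      next
        assume "gsep act (gs (Suc n)) e A B"
        moreover have "Suc n \<in> {1..Suc n}" by simp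
        ultimately show ?thesis by blast
      qed
    qed
    show ?case unfolding Inv_def using Q(1,2,3) cS sepS by blast
  qed
  have gsC: "\<forall>n. gs n \<in> carrier G" using inv unfolding Inv_def by blast
  have maps: "\<forall>i. \<forall>x\<in>X. act (gs i) x \<in> X" using gsC maps0 by blast
  have Ncov_ge: "c ^ n \<le> real (Ncov X (join_cover act X gs \<U> n))" for n
  proof -
    have I: "\<forall>A\<in>Ws n. openin (top_of_set X) A \<and> A \<noteq> {}" "c ^ n \<le> real (card (Ws n))"
      "\<forall>A\<in>Ws n. \<forall>B\<in>Ws n. A \<noteq> B \<longrightarrow> (\<exists>i\<in>{1..n}. gsep act (gs i) e A B)"
      using inv[of n] unfolding Inv_def by simp_all
    have "\<forall>A\<in>Ws n. A \<noteq> {} \<and> A \<subseteq> X"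
    proof
      fix A assume "A \<in> Ws n"
      then have "openin (top_of_set X) A \<and> A \<noteq> {}" using I(1) by blast
      then show "A \<noteq> {} \<and> A \<subseteq> X" using openin_imp_subset by blast
    qed
    then have "card (Ws n) \<le> Ncov X (join_cover act X gs \<U> n)"
      by (rule ncov_lower[OF finU UX maps diam _ I(3)])
    then show ?thesis using I(2) by linarith
  qed
  have "ereal (ln c) \<le> seq_entropy_cover act X gs \<U>"
    unfolding seq_entropy_cover_def
  proof (rule le_Limsup)
    show "sequentially \<noteq> bot" by simp
    show "\<forall>\<^sub>F n in sequentially. ereal (ln c) \<le> ereal (ln (real (Ncov X (join_cover act X gs \<U> n))) / real n)"
      unfolding eventually_sequentially
    proof (intro exI allI impI)
      fix n :: nat assume n: "1 \<le> n"
      have cn: "0 < c ^ n" using cpos by simp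
      have "real n * ln c = ln (c ^ n)" using cpos by (simp add: ln_realpow)
      also have "\<dots> \<le> ln (real (Ncov X (join_cover act X gs \<U> n)))"
        using Ncov_ge[of n] cn by (subst ln_le_cancel_iff) auto
      finally have le: "real n * ln c \<le> ln (real (Ncov X (join_cover act X gs \<U> n)))" .
      have "0 < real n" using n by simp
      then have "ln c \<le> ln (real (Ncov X (join_cover act X gs \<U> n))) / real n"
        using le by (simp add: pos_le_divide_eq mult.commute)
      then show "ereal (ln c) \<le> ereal (ln (real (Ncov X (join_cover act X gs \<U> n))) / real n)"
        by simp
    qed
  qed
  also have "\<dots> \<le> seq_entropy act X gs" unfolding seq_entropy_def
    by (rule SUP_upper) (use ocU in simp)
  also have "\<dots> \<le> sup_seq_entropy G act X" unfolding sup_seq_entropy_def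
    by (rule SUP_upper) (use gsC in simp)
  finally show ?thesis unfolding c_def .
qed

end
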